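(* Let $R$ be any binary relation on $U$. Then $\mathrm{DM(RS)}$ is completely distributive if and only if one (equivalently, each) of the lattices $\wp(U)^{\blacktriangle}$, $\wp(U)^{\blacktriangledown}$, $\wp(U)^{\vartriangle}$, $\wp(U)^{\triangledown}$ (ordered by $\subseteq$) is completely distributive.
   Context: Let $U$ be a set and $R\subseteq U\times U$ a binary relation. For $x\in U$, $R(x)=\{y\in U\mid (x,y)\in R\}$ and $\breve R(x)=\{y\in U\mid (y,x)\in R\}$. For $X\subseteq U$: $X^{\blacktriangledown}=\{x\in U\mid R(x)\subseteq X\}$, $X^{\blacktriangle}=\{x\in U\mid R(x)\cap X\neq\emptyset\}$, $X^{\triangledown}=\{x\in U\mid \breve R(x)\subseteq X\}$, $X^{\vartriangle}=\{x\in U\mid \breve R(x)\cap X\neq\emptyset\}$; composites like $X^{\vartriangle\blacktriangledown}$ mean $(X^{\vartriangle})^{\blacktriangledown}$. $\wp(U)^{\blacktriangledown}=\{X^{\blacktriangledown}\mid X\subseteq U\}$ and similarly $\wp(U)^{\blacktriangle},\wp(U)^{\triangledown},\wp(U)^{\vartriangle}$; each is a complete lattice under $\subseteq$. $\mathcal S=\{x\in U\mid |R(x)|=1\}$. $\mathrm{RS}=\{(X^{\blacktriangledown},X^{\blacktriangle})\mid X\subseteq U\}$ ordered coordinatewise; $\mathrm{DM(RS)}$ is its Dedekind–MacNeille completion, identified with $\{(A,B)\in\wp(U)^{\blacktriangledown}\times\wp(U)^{\blacktriangle}\mid A^{\vartriangle\blacktriangle}\subseteq B,\ A\cap\mathcal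 S=B\cap\mathcal S\}$ ordered coordinatewise, with meets $\bigwedge_i(X_i,Y_i)=(\bigcap_iX_i,(\bigcap_iY_i)^{\triangledown\blacktriangle})$ and joins $\bigvee_i(X_i,Y_i)=((\bigcup_iX_i)^{\vartriangle\blacktriangledown},\bigcup_iY_i)$. A complete lattice is completely distributive if $\bigwedge_{i\in I}\bigvee_{j\in J}x_{i,j}=\bigvee_{f\colon I\to J}\bigwedge_{i\in I}x_{i,f(i)}$ for all doubly indexed families. *)

theory Defs
  imports Main
begin

definition succR :: "('a \<times> 'a) set \<Rightarrow> 'a \<Rightarrow> 'a set" where
  "succR R x = {y. (x, y) \<in> R}"

definition predR :: "('a \<times> 'a) set \<Rightarrow> 'a \<Rightarrow> 'a set" where
  "predR R x = {y. (y, x) \<in> R}"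

definition lowB :: "('a \<times> 'a) set \<Rightarrow> 'a set \<Rightarrow> 'a set" where
  "lowB R X = {x. succR R x \<subseteq> X}"

definition uppB :: "('a \<times> 'a) set \<Rightarrow> 'a set \<Rightarrow> 'a set" where
  "uppB R X = {x. succR R x \<inter> X \<noteq> {}}"

definition lowW :: "('a \<times> 'a) set \<Rightarrow> 'a set \<Rightarrow> 'a set" where
  "lowW R X = {x. predR R x \<subseteq> X}"

definition uppW :: "('a \<times> 'a) set \<Rightarrow> 'a set \<Rightarrow> 'a set" where
  "uppW R X = {x. predR R x \<inter> X \<noteq> {}}"

definition singR :: "('a \<times> 'a) set \<Rightarrow> 'a set" where
  "singR R = {x. \<exists>y. succR R x = {y}}"

(* DM(RS), in its identified form *)
definition DMRS :: "('a \<times> 'a) set \<Rightarrow> ('a set \<times> 'a set) set" where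
  "DMRS R = {(A, B). A \<in> range (lowB R) \<and> B \<in> range (uppB R) \<and>
                     uppB R (uppW R A) \<subseteq> B \<and> A \<inter> singR R = B \<inter> singR R}"

definition pair_le :: "'a set \<times> 'a set \<Rightarrow> 'a set \<times> 'a set \<Rightarrow> bool" where
  "pair_le p q \<longleftrightarrow> fst p \<subseteq> fst q \<and> snd p \<subseteq> snd q"

definition is_lub :: "'b set \<Rightarrow> ('b \<Rightarrow> 'b \<Rightarrow> bool) \<Rightarrow> 'b set \<Rightarrow> 'b \<Rightarrow> bool" where
  "is_lub L le A x \<longleftrightarrow> x \<in> L \<and> (\<forall>a\<in>A. le a x) \<and> (\<forall>y\<in>L. (\<forall>a\<in>A. le a y) \<longrightarrow> le x y)"

definition is_glb :: "'b set \<Rightarrow> ('b \<Rightarrow> 'b \<Rightarrow> bool) \<Rightarrow> 'b set \<Rightarrow> 'b \<Rightarrow> bool" where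
  "is_glb L le A x \<longleftrightarrow> x \<in> L \<and> (\<forall>a\<in>A. le x a) \<and> (\<forall>y\<in>L. (\<forall>a\<in>A. le y a) \<longrightarrow> le y x)"

definition lub :: "'b set \<Rightarrow> ('b \<Rightarrow> 'b \<Rightarrow> bool) \<Rightarrow> 'b set \<Rightarrow> 'b" where
  "lub L le A = (THE x. is_lub L le A x)"

definition glb :: "'b set \<Rightarrow> ('b \<Rightarrow> 'b \<Rightarrow> bool) \<Rightarrow> 'b set \<Rightarrow> 'b" where
  "glb L le A = (THE x. is_glb L le A x)"

text \<open>Complete distributivity of the complete lattice (L, le), in the set-family form
  used by Isabelle's class complete_distrib_lattice: for every family of subsets,
  the meet of the joins equals the join of the meets over all choice functions.\<close>
definition compl_distrib :: "'b set \<Rightarrow> ('b \<Rightarrow> 'b \<Rightarrow> bool) \<Rightarrow> bool" where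
  "compl_distrib L le \<longleftrightarrow>
     (\<forall>\<A>. \<A> \<subseteq> Pow L \<longrightarrow>
        glb L le (lub L le ` \<A>) =
        lub L le (glb L le ` {f ` \<A> | f. \<forall>Y\<in>\<A>. f Y \<in> Y}))"

end

theory Submission
  imports Defs
begin


definition clat :: "'b set \<Rightarrow> ('b \<Rightarrow> 'b \<Rightarrow> bool) \<Rightarrow> bool" where
 "clat L le \<longleftrightarrow> (\<forall>x\<in>L. le x x) \<and> (\<forall>x\<in>L. \<forall>y\<in>L. le x y \<longrightarrow> le y x \<longrightarrow> x = y)
   \<and> (\<forall>x\<in>L. \<forall>y\<in>L. \<forall>z\<in>L. le x y \<longrightarrow> le y z \<longrightarrow> le x z)
   \<and> (\<forall>X. X \<subseteq> L \<longrightarrow> (\<exists>x. is_lub L le X x)) \<and> (\<forall>X. X \<subseteq> L \<longrightarrow> (\<exists>x. is_glb L le X x))"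

lemma clat_D1: "clat L le \<Longrightarrow> \<forall>x\<in>L. le x x"
  unfolding clat_def by (elim conjE) assumption
lemma clat_D2: "clat L le \<Longrightarrow> \<forall>x\<in>L. \<forall>y\<in>L. le x y \<longrightarrow> le y x \<longrightarrow> x = y"
  unfolding clat_def by (elim conjE) assumption
lemma clat_D3: "clat L le \<Longrightarrow> \<forall>x\<in>L. \<forall>y\<in>L. \<forall>z\<in>L. le x y \<longrightarrow> le y z \<longrightarrow> le x z"
  unfolding clat_def by (elim conjE) assumption
lemma clat_D4: "clat L le \<Longrightarrow> \<forall>X. X \<subseteq> L \<longrightarrow> (\<exists>x. is_lub L le X x)"
  unfolding clat_def by (elim conjE) assumption
lemma clat_D5: "clat L le \<Longrightarrow> \<forall>X. X \<subseteq> L \<longrightarrow> (\<exists>x. is_glb L le X x)"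
  unfolding clat_def by (elim conjE) assumption
lemmas clat_D = clat_D1 clat_D2 clat_D3 clat_D4 clat_D5

lemma clat_refl: "clat L le \<Longrightarrow> x \<in> L \<Longrightarrow> le x x" using clat_D(1) by blast
lemma clat_antisym: "clat L le \<Longrightarrow> x \<in> L \<Longrightarrow> y \<in> L \<Longrightarrow> le x y \<Longrightarrow> le y x \<Longrightarrow> x = y"
  using clat_D(2) by blast
lemma clat_trans: "clat L le \<Longrightarrow> x \<in> L \<Longrightarrow> y \<in> L \<Longrightarrow> z \<in> L \<Longrightarrow> le x y \<Longrightarrow> le y z \<Longrightarrow> le x z"
  using clat_D(3) by blast

lemma lub_eq: assumes "clat L le" "is_lub L le X x" shows "lub L le X = x"
  unfolding lub_def
proof (rule the_equality)
  show "is_lub L le X x" by fact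
  fix y assume "is_lub L le X y"
  then show "y = x" using assms clat_antisym[OF assms(1)] unfolding is_lub_def by blast
qed

lemma glb_eq: assumes "clat L le" "is_glb L le X x" shows "glb L le X = x"
  unfolding glb_def
proof (rule the_equality)
  show "is_glb L le X x" by fact
  fix y assume "is_glb L le X y"
  then show "y = x" using assms clat_antisym[OF assms(1)] unfolding is_glb_def by blast
qed

lemma lub_is: assumes "clat L le" "X \<subseteq> L" shows "is_lub L le X (lub L le X)"
proof -
  obtain x where "is_lub L le X x" using assms clat_D(4) by blast
  then show ?thesis using lub_eq[OF assms(1)] by simp
qed

lemma glb_is: assumes "clat L le" "X \<subseteq> L" shows "is_glb L le X (glb L le X)"
proof -
  obtain x where "is_glb L le X x" using assms clat_D(5) by blast
  then show ?thesis using glb_eq[OF assms(1)] by simp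
qed

lemma lub_in: "clat L le \<Longrightarrow> X \<subseteq> L \<Longrightarrow> lub L le X \<in> L"
  using lub_is unfolding is_lub_def by blast
lemma lub_upper: "clat L le \<Longrightarrow> X \<subseteq> L \<Longrightarrow> a \<in> X \<Longrightarrow> le a (lub L le X)"
  using lub_is unfolding is_lub_def by blast
lemma lub_least: "clat L le \<Longrightarrow> X \<subseteq> L \<Longrightarrow> y \<in> L \<Longrightarrow> (\<And>a. a \<in> X \<Longrightarrow> le a y) \<Longrightarrow> le (lub L le X) y"
  using lub_is unfolding is_lub_def by blast
lemma glb_in: "clat L le \<Longrightarrow> X \<subseteq> L \<Longrightarrow> glb L le X \<in> L"
  using glb_is unfolding is_glb_def by blast
lemma glb_lower: "clat L le \<Longrightarrow> X \<subseteq> L \<Longrightarrow> a \<in> X \<Longrightarrow> le (glb L le X) a"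
  using glb_is unfolding is_glb_def by blast
lemma glb_greatest: "clat L le \<Longrightarrow> X \<subseteq> L \<Longrightarrow> y \<in> L \<Longrightarrow> (\<And>a. a \<in> X \<Longrightarrow> le y a) \<Longrightarrow> le y (glb L le X)"
  using glb_is unfolding is_glb_def by blast

lemma is_lub_dual: "is_lub L (\<lambda>x y. le y x) = is_glb L le"
  unfolding is_lub_def is_glb_def by (intro ext) auto
lemma is_glb_dual: "is_glb L (\<lambda>x y. le y x) = is_lub L le"
  unfolding is_lub_def is_glb_def by (intro ext) auto
lemma lub_dual: "lub L (\<lambda>x y. le y x) = glb L le"
  unfolding lub_def glb_def is_lub_dual[of L le] by (rule refl)
lemma glb_dual: "glb L (\<lambda>x y. le y x) = lub L le"
  unfolding lub_def glb_def is_glb_dual[of L le] by (rule refl)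

lemma clat_dual: assumes "clat L le" shows "clat L (\<lambda>x y. le y x)"
proof -
  note d = clat_D1[OF assms] clat_D2[OF assms] clat_D3[OF assms] clat_D4[OF assms] clat_D5[OF assms]
  have 1: "\<forall>x\<in>L. (\<lambda>x y. le y x) x x" using d(1) by simp
  have 2: "\<forall>x\<in>L. \<forall>y\<in>L. (\<lambda>x y. le y x) x y \<longrightarrow> (\<lambda>x y. le y x) y x \<longrightarrow> x = y" using d(2) by blast
  have 3: "\<forall>x\<in>L. \<forall>y\<in>L. \<forall>z\<in>L. (\<lambda>x y. le y x) x y \<longrightarrow> (\<lambda>x y. le y x) y z \<longrightarrow> (\<lambda>x y. le y x) x z"
    using d(3) by blast
  show ?thesis unfolding clat_def is_lub_dual[of L le] is_glb_dual[of L le] using 1 2 3 d(4) d(5) by (intro conjI)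
qed

definition choices :: "'b set set \<Rightarrow> 'b set set" where
  "choices A = {f ` A | f. \<forall>Y\<in>A. f Y \<in> Y}"

lemma choices_sub: "A \<subseteq> Pow L \<Longrightarrow> choices A \<subseteq> Pow L"
  unfolding choices_def by blast

lemma lub_img_sub: "clat L le \<Longrightarrow> A \<subseteq> Pow L \<Longrightarrow> lub L le ` A \<subseteq> L"
  using lub_in by blast
lemma glb_img_sub: "clat L le \<Longrightarrow> A \<subseteq> Pow L \<Longrightarrow> glb L le ` A \<subseteq> L"
  using glb_in by blast

lemma cd_easy:
  assumes c: "clat L le" and A: "A \<subseteq> Pow L"
  shows "le (lub L le (glb L le ` choices A)) (glb L le (lub L le ` A))"
proof (rule lub_least[OF c])
  show "glb L le ` choices A \<subseteq> L" using glb_img_sub[OF c choices_sub[OF A]] .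
  show "glb L le (lub L le ` A) \<in> L" using glb_in[OF c lub_img_sub[OF c A]] .
  fix a assume "a \<in> glb L le ` choices A"
  then obtain f where a: "a = glb L le (f ` A)" and f: "\<forall>Y\<in>A. f Y \<in> Y"
    unfolding choices_def by blast
  have fA: "f ` A \<subseteq> L" using f A by blast
  show "le a (glb L le (lub L le ` A))"
    unfolding a
  proof (rule glb_greatest[OF c lub_img_sub[OF c A] glb_in[OF c fA]])
    fix b assume "b \<in> lub L le ` A"
    then obtain Y where Y: "Y \<in> A" "b = lub L le Y" by blast
    have YL: "Y \<subseteq> L" using Y A by blast
    show "le (glb L le (f ` A)) b"
      using clat_trans[OF c glb_in[OF c fA] _ lub_in[OF c YL] glb_lower[OF c fA] lub_upper[OF c YL]]
        f Y YL by blast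
  qed
qed

lemma cd_iff: assumes c: "clat L le"
  shows "compl_distrib L le \<longleftrightarrow>
    (\<forall>A. A \<subseteq> Pow L \<longrightarrow> le (glb L le (lub L le ` A)) (lub L le (glb L le ` choices A)))"
proof
  assume "compl_distrib L le"
  then show "\<forall>A. A \<subseteq> Pow L \<longrightarrow> le (glb L le (lub L le ` A)) (lub L le (glb L le ` choices A))"
  proof (intro allI impI)
    fix A assume A: "A \<subseteq> Pow L"
    have "glb L le (lub L le ` A) = lub L le (glb L le ` choices A)"
      using \<open>compl_distrib L le\<close> A unfolding compl_distrib_def choices_def by blast
    then show "le (glb L le (lub L le ` A)) (lub L le (glb L le ` choices A))"
      using clat_refl[OF c glb_in[OF c lub_img_sub[OF c A]]] by simp
  qed
next
  assume H: "\<forall>A. A \<subseteq> Pow L \<longrightarrow> le (glb L le (lub L le ` A)) (lub L le (glb L le ` choices A))"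
  show "compl_distrib L le" unfolding compl_distrib_def
  proof (intro allI impI)
    fix A assume A: "A \<subseteq> Pow L"
    show "glb L le (lub L le ` A) = lub L le (glb L le ` {f ` A |f. \<forall>Y\<in>A. f Y \<in> Y})"
      using clat_antisym[OF c glb_in[OF c lub_img_sub[OF c A]] lub_in[OF c glb_img_sub[OF c choices_sub[OF A]]]
         H[rule_format, OF A] cd_easy[OF c A]] unfolding choices_def .
  qed
qed

lemma cd_eq: "clat L le \<Longrightarrow> compl_distrib L le \<Longrightarrow> A \<subseteq> Pow L \<Longrightarrow>
   glb L le (lub L le ` A) = lub L le (glb L le ` choices A)"
  unfolding compl_distrib_def choices_def by blast




lemma cd_dual:
  assumes c: "clat L le" and cd: "compl_distrib L le"
  shows "compl_distrib L (\<lambda>x y. le y x)"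
proof -
  have "\<forall>A. A \<subseteq> Pow L \<longrightarrow> le (glb L le (lub L le ` choices A)) (lub L le (glb L le ` A))"
  proof (intro allI impI)
    fix A assume A: "A \<subseteq> Pow L"
    define C where "C = choices A"
    have C: "C \<subseteq> Pow L" unfolding C_def using choices_sub[OF A] .
    have eq: "glb L le (lub L le ` C) = lub L le (glb L le ` choices C)"
      using cd_eq[OF c cd C] .
    have gA: "glb L le ` A \<subseteq> L" using glb_img_sub[OF c A] .
    have "le (lub L le (glb L le ` choices C)) (lub L le (glb L le ` A))"
    proof (rule lub_least[OF c glb_img_sub[OF c choices_sub[OF C]] lub_in[OF c gA]])
      fix a assume "a \<in> glb L le ` choices C"
      then obtain F where a: "a = glb L le (F ` C)" and F: "\<forall>Y\<in>C. F Y \<in> Y"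
        unfolding choices_def by blast
      have FC: "F ` C \<subseteq> L" using F C by blast
      define m where "m = glb L le (F ` C)"
      have mL: "m \<in> L" unfolding m_def using glb_in[OF c FC] .
      show "le a (lub L le (glb L le ` A))"
      proof (cases "\<exists>Z\<in>A. le m (glb L le Z)")
        case True
        then obtain Z where Z: "Z \<in> A" "le m (glb L le Z)" by blast
        have ZL: "Z \<subseteq> L" using Z A by blast
        show ?thesis unfolding a m_def[symmetric]
          using clat_trans[OF c mL glb_in[OF c ZL] lub_in[OF c gA] Z(2) lub_upper[OF c gA]] Z(1) by blast
      next
        case False
        have ex: "\<forall>Z\<in>A. \<exists>x\<in>Z. \<not> le m x"
        proof
          fix Z assume Z: "Z \<in> A"
          have ZL: "Z \<subseteq> L" using Z A by blast
          show "\<exists>x\<in>Z. \<not> le m x"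
            using False Z glb_greatest[OF c ZL mL] by blast
        qed
        then obtain G where G: "\<forall>Z\<in>A. G Z \<in> Z \<and> \<not> le m (G Z)" by metis
        have GC: "G ` A \<in> C" unfolding C_def choices_def using G by blast
        then have "F (G ` A) \<in> G ` A" using F by blast
        then obtain Z where Z: "Z \<in> A" "F (G ` A) = G Z" by blast
        have "le m (F (G ` A))" unfolding m_def using glb_lower[OF c FC] GC by blast
        then show ?thesis using Z G by auto
      qed
    qed
    then show "le (glb L le (lub L le ` choices A)) (lub L le (glb L le ` A))"
      using eq unfolding C_def by simp
  qed
  then show ?thesis
    unfolding cd_iff[OF clat_dual[OF c]] lub_dual[of L le] glb_dual[of L le] by blast
qed

lemma cd_dual_iff: "clat L le \<Longrightarrow> compl_distrib L (\<lambda>x y. le y x) \<longleftrightarrow> compl_distrib L le"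
  using cd_dual[of L le] cd_dual[of L "\<lambda>x y. le y x"] clat_dual[of L le] by auto

lemma cd_image:
  assumes c: "clat L le" and c': "clat M le'" and onto: "\<phi> ` L = M"
    and plub: "\<And>X. X \<subseteq> L \<Longrightarrow> \<phi> (lub L le X) = lub M le' (\<phi> ` X)"
    and pglb: "\<And>X. X \<subseteq> L \<Longrightarrow> \<phi> (glb L le X) = glb M le' (\<phi> ` X)"
    and cd: "compl_distrib L le"
  shows "compl_distrib M le'"
  unfolding cd_iff[OF c']
proof (intro allI impI)
  fix A assume A: "A \<subseteq> Pow M"
  define pre where "pre Y = L \<inter> \<phi> -` Y" for Y
  define A' where "A' = pre ` A"
  have preL: "pre Y \<subseteq> L" for Y unfolding pre_def by blast
  have A': "A' \<subseteq> Pow L" unfolding A'_def using preL by blast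
  have img: "Y \<in> A \<Longrightarrow> \<phi> ` pre Y = Y" for Y using A onto unfolding pre_def by blast
  have "lub M le' ` A = \<phi> ` lub L le ` A'"
  proof -
    have "lub M le' Y = \<phi> (lub L le (pre Y))" if "Y \<in> A" for Y
      using plub[OF preL, of Y] img[OF that] by simp
    then show ?thesis unfolding A'_def image_image by (rule image_cong[OF refl])
  qed
  then have "glb M le' (lub M le' ` A) = \<phi> (glb L le (lub L le ` A'))"
    using pglb[OF lub_img_sub[OF c A']] by simp
  also have "\<dots> = \<phi> (lub L le (glb L le ` choices A'))" using cd_eq[OF c cd A'] by simp
  also have "\<dots> = lub M le' (\<phi> ` glb L le ` choices A')"
    using plub[OF glb_img_sub[OF c choices_sub[OF A']]] .
  also have "le' \<dots> (lub M le' (glb M le' ` choices A))"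
  proof (rule lub_least[OF c'])
    show "\<phi> ` glb L le ` choices A' \<subseteq> M" using onto glb_img_sub[OF c choices_sub[OF A']] by blast
    show "lub M le' (glb M le' ` choices A) \<in> M"
      using lub_in[OF c' glb_img_sub[OF c' choices_sub[OF A]]] .
    fix a assume "a \<in> \<phi> ` glb L le ` choices A'"
    then obtain g where a: "a = \<phi> (glb L le (g ` A'))" and g: "\<forall>Y\<in>A'. g Y \<in> Y"
      unfolding choices_def by blast
    define f where "f Y = \<phi> (g (pre Y))" for Y
    have f: "\<forall>Y\<in>A. f Y \<in> Y"
    proof
      fix Y assume "Y \<in> A"
      then have "pre Y \<in> A'" unfolding A'_def by blast
      then have "g (pre Y) \<in> pre Y" using g by blast
      then show "f Y \<in> Y" unfolding f_def pre_def by blast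
    qed
    have fA: "f ` A = \<phi> ` g ` A'" unfolding f_def A'_def image_image by simp
    have gA: "g ` A' \<subseteq> L" using g A' by blast
    have "a = glb M le' (f ` A)" unfolding a fA using pglb[OF gA] .
    moreover have "f ` A \<in> choices A" unfolding choices_def using f by blast
    ultimately show "le' a (lub M le' (glb M le' ` choices A))"
      using lub_upper[OF c' glb_img_sub[OF c' choices_sub[OF A]]] by blast
  qed
  finally show "le' (glb M le' (lub M le' ` A)) (lub M le' (glb M le' ` choices A))" .
qed

lemma iso_lub:
  assumes c: "clat L le" and c': "clat M le'"
    and phi: "\<phi> ` L \<subseteq> M" and psi: "\<psi> ` M \<subseteq> L"
    and inv1: "\<And>x. x \<in> L \<Longrightarrow> \<psi> (\<phi> x) = x" and inv2: "\<And>y. y \<in> M \<Longrightarrow> \<phi> (\<psi> y) = y"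
    and ord: "\<And>x y. x \<in> L \<Longrightarrow> y \<in> L \<Longrightarrow> le x y \<longleftrightarrow> le' (\<phi> x) (\<phi> y)"
    and X: "X \<subseteq> L"
  shows "\<phi> (lub L le X) = lub M le' (\<phi> ` X)"
proof -
  have "is_lub M le' (\<phi> ` X) (\<phi> (lub L le X))"
    unfolding is_lub_def
  proof (intro conjI ballI impI)
    show "\<phi> (lub L le X) \<in> M" using phi lub_in[OF c X] by blast
    fix b assume "b \<in> \<phi> ` X"
    then obtain a where "a \<in> X" "b = \<phi> a" by blast
    then show "le' b (\<phi> (lub L le X))" using ord lub_upper[OF c X] lub_in[OF c X] X by blast
  next
    fix y assume y: "y \<in> M" and ub: "\<forall>a\<in>\<phi> ` X. le' a y"
    have "le a (\<psi> y)" if "a \<in> X" for a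
      using ord[of a "\<psi> y"] that X psi y ub inv2[OF y] by auto
    then have "le (lub L le X) (\<psi> y)" using lub_least[OF c X] psi y by blast
    then show "le' (\<phi> (lub L le X)) y" using ord[of "lub L le X" "\<psi> y"] lub_in[OF c X] psi y inv2[OF y] by auto
  qed
  then show ?thesis using lub_eq[OF c'] by simp
qed

lemma iso_cd1:
  assumes c: "clat L le" and c': "clat M le'"
    and phi: "\<phi> ` L \<subseteq> M" and psi: "\<psi> ` M \<subseteq> L"
    and inv1: "\<And>x. x \<in> L \<Longrightarrow> \<psi> (\<phi> x) = x" and inv2: "\<And>y. y \<in> M \<Longrightarrow> \<phi> (\<psi> y) = y"
    and ord: "\<And>x y. x \<in> L \<Longrightarrow> y \<in> L \<Longrightarrow> le x y \<longleftrightarrow> le' (\<phi> x) (\<phi> y)"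
    and cd: "compl_distrib L le"
  shows "compl_distrib M le'"
proof (rule cd_image[OF c c' _ _ _ cd])
  show "\<phi> ` L = M" using phi psi inv2 by force
  fix X assume X: "X \<subseteq> L"
  show "\<phi> (lub L le X) = lub M le' (\<phi> ` X)" by (rule iso_lub[OF c c' phi psi inv1 inv2 ord X])
  show "\<phi> (glb L le X) = glb M le' (\<phi> ` X)"
    using iso_lub[OF clat_dual[OF c] clat_dual[OF c'] phi psi inv1 inv2 _ X] ord
    unfolding lub_dual[of L le] lub_dual[of M le'] by blast
qed

lemma iso_cd:
  assumes c: "clat L le" and c': "clat M le'"
    and phi: "\<phi> ` L \<subseteq> M" and psi: "\<psi> ` M \<subseteq> L"
    and inv1: "\<And>x. x \<in> L \<Longrightarrow> \<psi> (\<phi> x) = x" and inv2: "\<And>y. y \<in> M \<Longrightarrow> \<phi> (\<psi> y) = y"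
    and ord: "\<And>x y. x \<in> L \<Longrightarrow> y \<in> L \<Longrightarrow> le x y \<longleftrightarrow> le' (\<phi> x) (\<phi> y)"
  shows "compl_distrib L le \<longleftrightarrow> compl_distrib M le'"
proof
  assume "compl_distrib L le" then show "compl_distrib M le'"
    using iso_cd1[OF c c' phi psi inv1 inv2 ord] by blast
next
  have ord': "le' x y \<longleftrightarrow> le (\<psi> x) (\<psi> y)" if "x \<in> M" "y \<in> M" for x y
    using ord[of "\<psi> x" "\<psi> y"] that psi inv2 by auto
  assume "compl_distrib M le'" then show "compl_distrib L le"
    using iso_cd1[OF c' c psi phi inv2 inv1 ord'] by blast
qed




definition prodle :: "('b \<Rightarrow> 'b \<Rightarrow> bool) \<Rightarrow> ('c \<Rightarrow> 'c \<Rightarrow> bool) \<Rightarrow> 'b \<times> 'c \<Rightarrow> 'b \<times> 'c \<Rightarrow> bool" where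
  "prodle le1 le2 p q \<longleftrightarrow> le1 (fst p) (fst q) \<and> le2 (snd p) (snd q)"

lemma prod_is_lub:
  assumes c1: "clat L1 le1" and c2: "clat L2 le2" and X: "X \<subseteq> L1 \<times> L2"
  shows "is_lub (L1 \<times> L2) (prodle le1 le2) X (lub L1 le1 (fst ` X), lub L2 le2 (snd ` X))"
proof -
  have X1: "fst ` X \<subseteq> L1" and X2: "snd ` X \<subseteq> L2" using X by auto
  show ?thesis unfolding is_lub_def
  proof (intro conjI ballI impI)
    show "(lub L1 le1 (fst ` X), lub L2 le2 (snd ` X)) \<in> L1 \<times> L2"
      using lub_in[OF c1 X1] lub_in[OF c2 X2] by simp
    fix a assume "a \<in> X"
    then show "prodle le1 le2 a (lub L1 le1 (fst ` X), lub L2 le2 (snd ` X))"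
      unfolding prodle_def using lub_upper[OF c1 X1, of "fst a"] lub_upper[OF c2 X2, of "snd a"] by simp
  next
    fix y assume y: "y \<in> L1 \<times> L2" and ub: "\<forall>a\<in>X. prodle le1 le2 a y"
    have "le1 (lub L1 le1 (fst ` X)) (fst y)" by (rule lub_least[OF c1 X1]) (use y ub in \<open>auto simp: prodle_def\<close>)
    moreover have "le2 (lub L2 le2 (snd ` X)) (snd y)" by (rule lub_least[OF c2 X2]) (use y ub in \<open>auto simp: prodle_def\<close>)
    ultimately show "prodle le1 le2 (lub L1 le1 (fst ` X), lub L2 le2 (snd ` X)) y" unfolding prodle_def by simp
  qed
qed

lemma prod_is_glb:
  assumes c1: "clat L1 le1" and c2: "clat L2 le2" and X: "X \<subseteq> L1 \<times> L2"
  shows "is_glb (L1 \<times> L2) (prodle le1 le2) X (glb L1 le1 (fst ` X), glb L2 le2 (snd ` X))"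
proof -
  have X1: "fst ` X \<subseteq> L1" and X2: "snd ` X \<subseteq> L2" using X by auto
  show ?thesis unfolding is_glb_def
  proof (intro conjI ballI impI)
    show "(glb L1 le1 (fst ` X), glb L2 le2 (snd ` X)) \<in> L1 \<times> L2"
      using glb_in[OF c1 X1] glb_in[OF c2 X2] by simp
    fix a assume "a \<in> X"
    then show "prodle le1 le2 (glb L1 le1 (fst ` X), glb L2 le2 (snd ` X)) a"
      unfolding prodle_def using glb_lower[OF c1 X1, of "fst a"] glb_lower[OF c2 X2, of "snd a"] by simp
  next
    fix y assume y: "y \<in> L1 \<times> L2" and ub: "\<forall>a\<in>X. prodle le1 le2 y a"
    have "le1 (fst y) (glb L1 le1 (fst ` X))" by (rule glb_greatest[OF c1 X1]) (use y ub in \<open>auto simp: prodle_def\<close>)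
    moreover have "le2 (snd y) (glb L2 le2 (snd ` X))" by (rule glb_greatest[OF c2 X2]) (use y ub in \<open>auto simp: prodle_def\<close>)
    ultimately show "prodle le1 le2 y (glb L1 le1 (fst ` X), glb L2 le2 (snd ` X))" unfolding prodle_def by simp
  qed
qed

lemma clat_prod:
  assumes c1: "clat L1 le1" and c2: "clat L2 le2"
  shows "clat (L1 \<times> L2) (prodle le1 le2)"
  unfolding clat_def
proof (intro conjI)
  show "\<forall>x\<in>L1 \<times> L2. prodle le1 le2 x x" unfolding prodle_def using clat_refl[OF c1] clat_refl[OF c2] by auto
  show "\<forall>x\<in>L1 \<times> L2. \<forall>y\<in>L1 \<times> L2. prodle le1 le2 x y \<longrightarrow> prodle le1 le2 y x \<longrightarrow> x = y"
    unfolding prodle_def using clat_antisym[OF c1] clat_antisym[OF c2] by (auto simp: prod_eq_iff)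
  show "\<forall>x\<in>L1 \<times> L2. \<forall>y\<in>L1 \<times> L2. \<forall>z\<in>L1 \<times> L2. prodle le1 le2 x y \<longrightarrow> prodle le1 le2 y z \<longrightarrow> prodle le1 le2 x z"
  proof (intro ballI impI)
    fix x y z assume xyz: "x \<in> L1 \<times> L2" "y \<in> L1 \<times> L2" "z \<in> L1 \<times> L2"
      and "prodle le1 le2 x y" "prodle le1 le2 y z"
    then show "prodle le1 le2 x z" unfolding prodle_def
      using clat_trans[OF c1, of "fst x" "fst y" "fst z"] clat_trans[OF c2, of "snd x" "snd y" "snd z"]
      by (auto simp: mem_Times_iff)
  qed
  show "\<forall>X. X \<subseteq> L1 \<times> L2 \<longrightarrow> (\<exists>x. is_lub (L1 \<times> L2) (prodle le1 le2) X x)"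
    using prod_is_lub[OF c1 c2] by blast
  show "\<forall>X. X \<subseteq> L1 \<times> L2 \<longrightarrow> (\<exists>x. is_glb (L1 \<times> L2) (prodle le1 le2) X x)"
    using prod_is_glb[OF c1 c2] by blast
qed

lemma prod_lub: "clat L1 le1 \<Longrightarrow> clat L2 le2 \<Longrightarrow> X \<subseteq> L1 \<times> L2 \<Longrightarrow>
  lub (L1 \<times> L2) (prodle le1 le2) X = (lub L1 le1 (fst ` X), lub L2 le2 (snd ` X))"
  using lub_eq[OF clat_prod prod_is_lub] by blast

lemma prod_glb: "clat L1 le1 \<Longrightarrow> clat L2 le2 \<Longrightarrow> X \<subseteq> L1 \<times> L2 \<Longrightarrow>
  glb (L1 \<times> L2) (prodle le1 le2) X = (glb L1 le1 (fst ` X), glb L2 le2 (snd ` X))"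
  using glb_eq[OF clat_prod prod_is_glb] by blast




lemma prod_cd_fst:
  fixes L1 :: "'x set" and L2 :: "'y set"
  assumes c1: "clat L1 le1" and c2: "clat L2 le2" and cd1: "compl_distrib L1 le1"
    and A: "A \<subseteq> Pow (L1 \<times> L2)"
  shows "le1 (glb L1 le1 (lub L1 le1 ` (image fst) ` A))
             (lub L1 le1 (fst ` glb (L1 \<times> L2) (prodle le1 le2) ` choices A))"
proof -
  let ?P = "L1 \<times> L2" and ?le = "prodle le1 le2"
  have cP: "clat ?P ?le" using clat_prod[OF c1 c2] .
  define A1 where "A1 = image fst ` A"
  have A1: "A1 \<subseteq> Pow L1" unfolding A1_def using A by (force simp: subset_iff)
  have S: "fst ` glb ?P ?le ` choices A \<subseteq> L1"
    using glb_img_sub[OF cP choices_sub[OF A]] by auto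
  have "glb L1 le1 (lub L1 le1 ` A1) = lub L1 le1 (glb L1 le1 ` choices A1)"
    using cd_eq[OF c1 cd1 A1] .
  also have "le1 \<dots> (lub L1 le1 (fst ` glb ?P ?le ` choices A))"
  proof (rule lub_least[OF c1 glb_img_sub[OF c1 choices_sub[OF A1]] lub_in[OF c1 S]])
    fix a assume "a \<in> glb L1 le1 ` choices A1"
    then obtain g where a: "a = glb L1 le1 (g ` A1)" and g: "\<forall>Y\<in>A1. g Y \<in> Y"
      unfolding choices_def by blast
    define f where "f Y = (SOME p. p \<in> Y \<and> fst p = g (fst ` Y))" for Y :: "('x \<times> 'y) set"
    have f: "f Y \<in> Y \<and> fst (f Y) = g (fst ` Y)" if "Y \<in> A" for Y
    proof -
      have "fst ` Y \<in> A1" unfolding A1_def using that by blast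
      then have "g (fst ` Y) \<in> fst ` Y" using g by blast
      then have "\<exists>p. p \<in> Y \<and> fst p = g (fst ` Y)" by force
      then show ?thesis unfolding f_def by (rule someI_ex)
    qed
    have fA: "f ` A \<subseteq> ?P" using f A by blast
    have fst_eq: "fst ` f ` A = g ` A1" unfolding A1_def image_image using f by force
    have "fst (glb ?P ?le (f ` A)) = glb L1 le1 (fst ` f ` A)"
      using prod_glb[OF c1 c2 fA] by simp
    then have "a = fst (glb ?P ?le (f ` A))" unfolding a fst_eq by simp
    moreover have "f ` A \<in> choices A" unfolding choices_def using f by blast
    ultimately show "le1 a (lub L1 le1 (fst ` glb ?P ?le ` choices A))"
      using lub_upper[OF c1 S] by blast
  qed
  finally show ?thesis unfolding A1_def .
qed

lemma prod_cd_snd: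
  fixes L1 :: "'x set" and L2 :: "'y set"
  assumes c1: "clat L1 le1" and c2: "clat L2 le2" and cd2: "compl_distrib L2 le2"
    and A: "A \<subseteq> Pow (L1 \<times> L2)"
  shows "le2 (glb L2 le2 (lub L2 le2 ` (image snd) ` A))
             (lub L2 le2 (snd ` glb (L1 \<times> L2) (prodle le1 le2) ` choices A))"
proof -
  let ?P = "L1 \<times> L2" and ?le = "prodle le1 le2"
  have cP: "clat ?P ?le" using clat_prod[OF c1 c2] .
  define A1 where "A1 = image snd ` A"
  have A1: "A1 \<subseteq> Pow L2" unfolding A1_def using A by (force simp: subset_iff)
  have S: "snd ` glb ?P ?le ` choices A \<subseteq> L2"
    using glb_img_sub[OF cP choices_sub[OF A]] by auto
  have "glb L2 le2 (lub L2 le2 ` A1) = lub L2 le2 (glb L2 le2 ` choices A1)"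
    using cd_eq[OF c2 cd2 A1] .
  also have "le2 \<dots> (lub L2 le2 (snd ` glb ?P ?le ` choices A))"
  proof (rule lub_least[OF c2 glb_img_sub[OF c2 choices_sub[OF A1]] lub_in[OF c2 S]])
    fix a assume "a \<in> glb L2 le2 ` choices A1"
    then obtain g where a: "a = glb L2 le2 (g ` A1)" and g: "\<forall>Y\<in>A1. g Y \<in> Y"
      unfolding choices_def by blast
    define f where "f Y = (SOME p. p \<in> Y \<and> snd p = g (snd ` Y))" for Y :: "('x \<times> 'y) set"
    have f: "f Y \<in> Y \<and> snd (f Y) = g (snd ` Y)" if "Y \<in> A" for Y
    proof -
      have "snd ` Y \<in> A1" unfolding A1_def using that by blast
      then have "g (snd ` Y) \<in> snd ` Y" using g by blast
      then have "\<exists>p. p \<in> Y \<and> snd p = g (snd ` Y)" by force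
      then show ?thesis unfolding f_def by (rule someI_ex)
    qed
    have fA: "f ` A \<subseteq> ?P" using f A by blast
    have snd_eq: "snd ` f ` A = g ` A1" unfolding A1_def image_image using f by force
    have "snd (glb ?P ?le (f ` A)) = glb L2 le2 (snd ` f ` A)"
      using prod_glb[OF c1 c2 fA] by simp
    then have "a = snd (glb ?P ?le (f ` A))" unfolding a snd_eq by simp
    moreover have "f ` A \<in> choices A" unfolding choices_def using f by blast
    ultimately show "le2 a (lub L2 le2 (snd ` glb ?P ?le ` choices A))"
      using lub_upper[OF c2 S] by blast
  qed
  finally show ?thesis unfolding A1_def .
qed

lemma prodle_pair: "prodle le1 le2 (a, b) (c, d) \<longleftrightarrow> le1 a c \<and> le2 b d"
  by (simp add: prodle_def)

lemma cd_prod: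
  assumes c1: "clat L1 le1" and c2: "clat L2 le2"
    and cd1: "compl_distrib L1 le1" and cd2: "compl_distrib L2 le2"
  shows "compl_distrib (L1 \<times> L2) (prodle le1 le2)"
  unfolding cd_iff[OF clat_prod[OF c1 c2]]
proof (intro allI impI)
  let ?P = "L1 \<times> L2" and ?le = "prodle le1 le2"
  have cP: "clat ?P ?le" using clat_prod[OF c1 c2] .
  fix A assume A: "A \<subseteq> Pow ?P"
  have LA: "lub ?P ?le ` A \<subseteq> ?P" using lub_img_sub[OF cP A] .
  have GA: "glb ?P ?le ` choices A \<subseteq> ?P" using glb_img_sub[OF cP choices_sub[OF A]] .
  have e1: "fst ` lub ?P ?le ` A = lub L1 le1 ` (image fst) ` A"
    unfolding image_image using prod_lub[OF c1 c2] A by (intro image_cong) auto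
  have e2: "snd ` lub ?P ?le ` A = lub L2 le2 ` (image snd) ` A"
    unfolding image_image using prod_lub[OF c1 c2] A by (intro image_cong) auto
  show "?le (glb ?P ?le (lub ?P ?le ` A)) (lub ?P ?le (glb ?P ?le ` choices A))"
    unfolding prod_glb[OF c1 c2 LA] prod_lub[OF c1 c2 GA] prodle_pair e1 e2
    using prod_cd_fst[OF c1 c2 cd1 A] prod_cd_snd[OF c1 c2 cd2 A] by simp
qed

lemma sub_is_lub:
  assumes c: "clat L le" and N: "N \<subseteq> L" and cl: "\<And>X. X \<subseteq> N \<Longrightarrow> lub L le X \<in> N" and X: "X \<subseteq> N"
  shows "is_lub N le X (lub L le X)"
proof -
  have XL: "X \<subseteq> L" using X N by blast
  show ?thesis unfolding is_lub_def
  proof (intro conjI ballI impI)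
    show "lub L le X \<in> N" by (rule cl[OF X])
    fix a assume "a \<in> X" then show "le a (lub L le X)" by (rule lub_upper[OF c XL])
  next
    fix y assume y: "y \<in> N" and h: "\<forall>a\<in>X. le a y"
    show "le (lub L le X) y" using lub_least[OF c XL] y N h by blast
  qed
qed

lemma sub_is_glb:
  assumes c: "clat L le" and N: "N \<subseteq> L" and cl: "\<And>X. X \<subseteq> N \<Longrightarrow> glb L le X \<in> N" and X: "X \<subseteq> N"
  shows "is_glb N le X (glb L le X)"
proof -
  have XL: "X \<subseteq> L" using X N by blast
  show ?thesis unfolding is_glb_def
  proof (intro conjI ballI impI)
    show "glb L le X \<in> N" by (rule cl[OF X])
    fix a assume "a \<in> X" then show "le (glb L le X) a" by (rule glb_lower[OF c XL])
  next
    fix y assume y: "y \<in> N" and h: "\<forall>a\<in>X. le y a"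
    show "le y (glb L le X)" using glb_greatest[OF c XL] y N h by blast
  qed
qed

lemma clat_sub:
  assumes c: "clat L le" and N: "N \<subseteq> L" and cl1: "\<And>X. X \<subseteq> N \<Longrightarrow> lub L le X \<in> N"
    and cl2: "\<And>X. X \<subseteq> N \<Longrightarrow> glb L le X \<in> N"
  shows "clat N le"
proof -
  have 1: "\<forall>x\<in>N. le x x" using clat_refl[OF c] N by blast
  have 2: "\<forall>x\<in>N. \<forall>y\<in>N. le x y \<longrightarrow> le y x \<longrightarrow> x = y" using clat_antisym[OF c] N by blast
  have 3: "\<forall>x\<in>N. \<forall>y\<in>N. \<forall>z\<in>N. le x y \<longrightarrow> le y z \<longrightarrow> le x z"
  proof (intro ballI impI)
    fix x y z assume "x \<in> N" "y \<in> N" "z \<in> N" "le x y" "le y z"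
    then show "le x z" using clat_trans[OF c, of x y z] N by blast
  qed
  have 4: "\<forall>X. X \<subseteq> N \<longrightarrow> (\<exists>x. is_lub N le X x)" using sub_is_lub[OF c N cl1] by blast
  have 5: "\<forall>X. X \<subseteq> N \<longrightarrow> (\<exists>x. is_glb N le X x)" using sub_is_glb[OF c N cl2] by blast
  show ?thesis unfolding clat_def using 1 2 3 4 5 by (intro conjI)
qed

lemma sub_lub:
  assumes c: "clat L le" and N: "N \<subseteq> L" and cl1: "\<And>X. X \<subseteq> N \<Longrightarrow> lub L le X \<in> N"
    and cl2: "\<And>X. X \<subseteq> N \<Longrightarrow> glb L le X \<in> N" and X: "X \<subseteq> N"
  shows "lub N le X = lub L le X"
  using lub_eq[OF clat_sub[OF c N cl1 cl2] sub_is_lub[OF c N cl1 X]] .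

lemma sub_glb:
  assumes c: "clat L le" and N: "N \<subseteq> L" and cl1: "\<And>X. X \<subseteq> N \<Longrightarrow> lub L le X \<in> N"
    and cl2: "\<And>X. X \<subseteq> N \<Longrightarrow> glb L le X \<in> N" and X: "X \<subseteq> N"
  shows "glb N le X = glb L le X"
  using glb_eq[OF clat_sub[OF c N cl1 cl2] sub_is_glb[OF c N cl2 X]] .

lemma cd_sub:
  assumes c: "clat L le" and N: "N \<subseteq> L" and cl1: "\<And>X. X \<subseteq> N \<Longrightarrow> lub L le X \<in> N"
    and cl2: "\<And>X. X \<subseteq> N \<Longrightarrow> glb L le X \<in> N" and cd: "compl_distrib L le"
  shows "compl_distrib N le"
  unfolding compl_distrib_def
proof (intro allI impI)
  fix A assume A: "A \<subseteq> Pow N"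
  have AL: "A \<subseteq> Pow L" using A N by blast
  have l: "lub N le ` A = lub L le ` A"
    using sub_lub[OF c N cl1 cl2] A by (intro image_cong) auto
  have LA: "lub L le ` A \<subseteq> N" using cl1 A by blast
  have C: "choices A \<subseteq> Pow N" using choices_sub[OF A] .
  have g: "glb N le ` choices A = glb L le ` choices A"
    using sub_glb[OF c N cl1 cl2] C by (intro image_cong) auto
  have GA: "glb L le ` choices A \<subseteq> N" using cl2 C by blast
  have "glb N le (lub N le ` A) = glb L le (lub L le ` A)"
    using l sub_glb[OF c N cl1 cl2 LA] by simp
  also have "\<dots> = lub L le (glb L le ` choices A)" using cd_eq[OF c cd AL] .
  also have "\<dots> = lub N le (glb N le ` choices A)"
    using g sub_lub[OF c N cl1 cl2 GA] by simp
  finally have "glb N le (lub N le ` A) = lub N le (glb N le ` choices A)" .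
  then show "glb N le (lub N le ` A) = lub N le (glb N le ` {f ` A |f. \<forall>Y\<in>A. f Y \<in> Y})"
    unfolding choices_def .
qed

lemma union_closed_is_lub: "(\<And>X. X \<subseteq> L \<Longrightarrow> \<Union>X \<in> L) \<Longrightarrow> X \<subseteq> L \<Longrightarrow> is_lub L (\<subseteq>) X (\<Union>X)"
  unfolding is_lub_def by blast
lemma union_closed_is_glb: "(\<And>X. X \<subseteq> L \<Longrightarrow> \<Union>X \<in> L) \<Longrightarrow> X \<subseteq> L \<Longrightarrow>
   is_glb L (\<subseteq>) X (\<Union>{Z\<in>L. \<forall>a\<in>X. Z \<subseteq> a})"
  unfolding is_glb_def
proof (intro conjI)
  assume cl: "\<And>X. X \<subseteq> L \<Longrightarrow> \<Union>X \<in> L"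
  show "\<Union>{Z\<in>L. \<forall>a\<in>X. Z \<subseteq> a} \<in> L" by (rule cl) blast
  show "\<forall>a\<in>X. \<Union>{Z\<in>L. \<forall>a\<in>X. Z \<subseteq> a} \<subseteq> a" by blast
  show "\<forall>y\<in>L. (\<forall>a\<in>X. y \<subseteq> a) \<longrightarrow> y \<subseteq> \<Union>{Z\<in>L. \<forall>a\<in>X. Z \<subseteq> a}" by blast
qed

lemma union_closed_clat: assumes "\<And>X. X \<subseteq> L \<Longrightarrow> \<Union>X \<in> L" shows "clat L (\<subseteq>)"
  unfolding clat_def using union_closed_is_lub[OF assms] union_closed_is_glb[OF assms] by blast

lemma inter_closed_is_glb: "(\<And>X. X \<subseteq> L \<Longrightarrow> \<Inter>X \<in> L) \<Longrightarrow> X \<subseteq> L \<Longrightarrow> is_glb L (\<subseteq>) X (\<Inter>X)"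
  unfolding is_glb_def by blast
lemma inter_closed_is_lub: "(\<And>X. X \<subseteq> L \<Longrightarrow> \<Inter>X \<in> L) \<Longrightarrow> X \<subseteq> L \<Longrightarrow>
   is_lub L (\<subseteq>) X (\<Inter>{Z\<in>L. \<forall>a\<in>X. a \<subseteq> Z})"
  unfolding is_lub_def
proof (intro conjI)
  assume cl: "\<And>X. X \<subseteq> L \<Longrightarrow> \<Inter>X \<in> L"
  show "\<Inter>{Z\<in>L. \<forall>a\<in>X. a \<subseteq> Z} \<in> L" by (rule cl) blast
  show "\<forall>a\<in>X. a \<subseteq> \<Inter>{Z\<in>L. \<forall>a\<in>X. a \<subseteq> Z}" by blast
  show "\<forall>y\<in>L. (\<forall>a\<in>X. a \<subseteq> y) \<longrightarrow> \<Inter>{Z\<in>L. \<forall>a\<in>X. a \<subseteq> Z} \<subseteq> y" by blast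
qed

lemma inter_closed_clat: assumes "\<And>X. X \<subseteq> L \<Longrightarrow> \<Inter>X \<in> L" shows "clat L (\<subseteq>)"
  unfolding clat_def using inter_closed_is_lub[OF assms] inter_closed_is_glb[OF assms] by blast




lemmas rdefs = lowB_def uppB_def lowW_def uppW_def succR_def predR_def

lemma range_sub_img: "X \<subseteq> range f \<Longrightarrow> X = f ` {Z. f Z \<in> X}"
  by blast

lemma uppB_Union: "uppB R (\<Union>Y) = \<Union>(uppB R ` Y)" unfolding rdefs by blast
lemma uppW_Union: "uppW R (\<Union>Y) = \<Union>(uppW R ` Y)" unfolding rdefs by blast
lemma lowB_Inter: "lowB R (\<Inter>Y) = \<Inter>(lowB R ` Y)" unfolding rdefs by blast
lemma lowW_Inter: "lowW R (\<Inter>Y) = \<Inter>(lowW R ` Y)" unfolding rdefs by blast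

lemma uppB_closed: "X \<subseteq> range (uppB R) \<Longrightarrow> \<Union>X \<in> range (uppB R)"
  by (subst range_sub_img[of X], assumption, unfold uppB_Union[symmetric]) (rule rangeI)
lemma uppW_closed: "X \<subseteq> range (uppW R) \<Longrightarrow> \<Union>X \<in> range (uppW R)"
  by (subst range_sub_img[of X], assumption, unfold uppW_Union[symmetric]) (rule rangeI)
lemma lowB_closed: "X \<subseteq> range (lowB R) \<Longrightarrow> \<Inter>X \<in> range (lowB R)"
  by (subst range_sub_img[of X], assumption, unfold lowB_Inter[symmetric]) (rule rangeI)
lemma lowW_closed: "X \<subseteq> range (lowW R) \<Longrightarrow> \<Inter>X \<in> range (lowW R)"
  by (subst range_sub_img[of X], assumption, unfold lowW_Inter[symmetric]) (rule rangeI)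

lemma clat_uppB: "clat (range (uppB R)) (\<subseteq>)" by (rule union_closed_clat, rule uppB_closed)
lemma clat_uppW: "clat (range (uppW R)) (\<subseteq>)" by (rule union_closed_clat, rule uppW_closed)
lemma clat_lowB: "clat (range (lowB R)) (\<subseteq>)" by (rule inter_closed_clat, rule lowB_closed)
lemma clat_lowW: "clat (range (lowW R)) (\<subseteq>)" by (rule inter_closed_clat, rule lowW_closed)

lemma gc1: "uppB R X \<subseteq> Y \<longleftrightarrow> X \<subseteq> lowW R Y" unfolding rdefs by blast
lemma gc2: "uppW R X \<subseteq> Y \<longleftrightarrow> X \<subseteq> lowB R Y" unfolding rdefs by blast
lemma mono_uppB: "X \<subseteq> Y \<Longrightarrow> uppB R X \<subseteq> uppB R Y" unfolding rdefs by blast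
lemma mono_uppW: "X \<subseteq> Y \<Longrightarrow> uppW R X \<subseteq> uppW R Y" unfolding rdefs by blast
lemma mono_lowB: "X \<subseteq> Y \<Longrightarrow> lowB R X \<subseteq> lowB R Y" unfolding rdefs by blast
lemma mono_lowW: "X \<subseteq> Y \<Longrightarrow> lowW R X \<subseteq> lowW R Y" unfolding rdefs by blast
lemma tri1: "uppB R (lowW R (uppB R X)) = uppB R X" unfolding rdefs by blast
lemma tri2: "lowW R (uppB R (lowW R X)) = lowW R X" unfolding rdefs by blast
lemma tri3: "uppW R (lowB R (uppW R X)) = uppW R X" unfolding rdefs by blast
lemma tri4: "lowB R (uppW R (lowB R X)) = lowB R X" unfolding rdefs by blast
lemma compl_uppB: "- uppB R X = lowB R (- X)" unfolding rdefs by blast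

lemma cd_uppB_lowW: "compl_distrib (range (uppB R)) (\<subseteq>) \<longleftrightarrow> compl_distrib (range (lowW R)) (\<subseteq>)"
proof (rule iso_cd[OF clat_uppB clat_lowW, where \<phi> = "lowW R" and \<psi> = "uppB R"])
  show "lowW R ` range (uppB R) \<subseteq> range (lowW R)" by blast
  show "uppB R ` range (lowW R) \<subseteq> range (uppB R)" by blast
  show "\<And>x. x \<in> range (uppB R) \<Longrightarrow> uppB R (lowW R x) = x" by (auto simp: tri1)
  show "\<And>y. y \<in> range (lowW R) \<Longrightarrow> lowW R (uppB R y) = y" by (auto simp: tri2)
  fix x y assume xy: "x \<in> range (uppB R)" "y \<in> range (uppB R)"
  show "x \<subseteq> y \<longleftrightarrow> lowW R x \<subseteq> lowW R y"
  proof
    assume "x \<subseteq> y" then show "lowW R x \<subseteq> lowW R y" by (rule mono_lowW)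
  next
    assume "lowW R x \<subseteq> lowW R y"
    then have h: "uppB R (lowW R x) \<subseteq> uppB R (lowW R y)" by (rule mono_uppB)
    from xy obtain a b where "x = uppB R a" "y = uppB R b" by blast
    then show "x \<subseteq> y" using h by (simp add: tri1)
  qed
qed

lemma cd_uppW_lowB: "compl_distrib (range (uppW R)) (\<subseteq>) \<longleftrightarrow> compl_distrib (range (lowB R)) (\<subseteq>)"
proof (rule iso_cd[OF clat_uppW clat_lowB, where \<phi> = "lowB R" and \<psi> = "uppW R"])
  show "lowB R ` range (uppW R) \<subseteq> range (lowB R)" by blast
  show "uppW R ` range (lowB R) \<subseteq> range (uppW R)" by blast
  show "\<And>x. x \<in> range (uppW R) \<Longrightarrow> uppW R (lowB R x) = x" by (auto simp: tri3)
  show "\<And>y. y \<in> range (lowB R) \<Longrightarrow> lowB R (uppW R y) = y" by (auto simp: tri4)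
  fix x y assume xy: "x \<in> range (uppW R)" "y \<in> range (uppW R)"
  show "x \<subseteq> y \<longleftrightarrow> lowB R x \<subseteq> lowB R y"
  proof
    assume "x \<subseteq> y" then show "lowB R x \<subseteq> lowB R y" by (rule mono_lowB)
  next
    assume "lowB R x \<subseteq> lowB R y"
    then have h: "uppW R (lowB R x) \<subseteq> uppW R (lowB R y)" by (rule mono_uppW)
    from xy obtain a b where "x = uppW R a" "y = uppW R b" by blast
    then show "x \<subseteq> y" using h by (simp add: tri3)
  qed
qed

lemma cd_uppB_lowB: "compl_distrib (range (uppB R)) (\<subseteq>) \<longleftrightarrow> compl_distrib (range (lowB R)) (\<subseteq>)"
proof -
  have "compl_distrib (range (uppB R)) (\<subseteq>) \<longleftrightarrow> compl_distrib (range (lowB R)) (\<lambda>x y. y \<subseteq> x)"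
  proof (rule iso_cd[OF clat_uppB clat_dual[OF clat_lowB], where \<phi> = uminus and \<psi> = uminus])
    show "uminus ` range (uppB R) \<subseteq> range (lowB R)" by (auto simp: compl_uppB)
    show "uminus ` range (lowB R) \<subseteq> range (uppB R)"
    proof
      fix z assume "z \<in> uminus ` range (lowB R)"
      then obtain X where "z = - lowB R X" by blast
      moreover have "- lowB R X = uppB R (- X)" using compl_uppB[of R "- X"] by (metis double_compl)
      ultimately have "z = uppB R (- X)" by simp
      then show "z \<in> range (uppB R)" by blast
    qed
    show "\<And>x. x \<in> range (uppB R) \<Longrightarrow> - (- x) = x" by simp
    show "\<And>y. y \<in> range (lowB R) \<Longrightarrow> - (- y) = y" by simp
    show "\<And>x y. x \<in> range (uppB R) \<Longrightarrow> y \<in> range (uppB R) \<Longrightarrow> x \<subseteq> y \<longleftrightarrow> - y \<subseteq> - x" by simp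
  qed
  also have "\<dots> \<longleftrightarrow> compl_distrib (range (lowB R)) (\<subseteq>)" using cd_dual_iff[OF clat_lowB] .
  finally show ?thesis .
qed




lemma lowB_is_lub: "Z \<subseteq> range (lowB R) \<Longrightarrow> is_lub (range (lowB R)) (\<subseteq>) Z (lowB R (uppW R (\<Union>Z)))"
  unfolding is_lub_def
proof (intro conjI ballI impI)
  assume Z: "Z \<subseteq> range (lowB R)"
  show "lowB R (uppW R (\<Union>Z)) \<in> range (lowB R)" by (rule rangeI)
  fix a assume "a \<in> Z"
  then have "a \<subseteq> \<Union>Z" by blast
  then have "uppW R a \<subseteq> uppW R (\<Union>Z)" by (rule mono_uppW)
  then show "a \<subseteq> lowB R (uppW R (\<Union>Z))" unfolding gc2[symmetric] .
next
  fix y assume y: "y \<in> range (lowB R)" and ub: "\<forall>a\<in>Z. a \<subseteq> y"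
  then obtain W where W: "y = lowB R W" by blast
  have "\<Union>Z \<subseteq> y" using ub by blast
  then have "uppW R (\<Union>Z) \<subseteq> W" unfolding W gc2 .
  then show "lowB R (uppW R (\<Union>Z)) \<subseteq> y" unfolding W by (rule mono_lowB)
qed

lemma uppB_is_glb: "Z \<subseteq> range (uppB R) \<Longrightarrow> is_glb (range (uppB R)) (\<subseteq>) Z (uppB R (lowW R (\<Inter>Z)))"
  unfolding is_glb_def
proof (intro conjI ballI impI)
  assume Z: "Z \<subseteq> range (uppB R)"
  show "uppB R (lowW R (\<Inter>Z)) \<in> range (uppB R)" by (rule rangeI)
  fix a assume "a \<in> Z"
  then have "\<Inter>Z \<subseteq> a" by blast
  then have "lowW R (\<Inter>Z) \<subseteq> lowW R a" by (rule mono_lowW)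
  then show "uppB R (lowW R (\<Inter>Z)) \<subseteq> a" unfolding gc1 .
next
  fix y assume y: "y \<in> range (uppB R)" and lb: "\<forall>a\<in>Z. y \<subseteq> a"
  then obtain W where W: "y = uppB R W" by blast
  have "y \<subseteq> \<Inter>Z" using lb by blast
  then have "W \<subseteq> lowW R (\<Inter>Z)" unfolding W gc1 .
  then show "y \<subseteq> uppB R (lowW R (\<Inter>Z))" unfolding W by (rule mono_uppB)
qed

lemma lowB_lub: "Z \<subseteq> range (lowB R) \<Longrightarrow> lub (range (lowB R)) (\<subseteq>) Z = lowB R (uppW R (\<Union>Z))"
  by (rule lub_eq[OF clat_lowB lowB_is_lub])
lemma uppB_glb: "Z \<subseteq> range (uppB R) \<Longrightarrow> glb (range (uppB R)) (\<subseteq>) Z = uppB R (lowW R (\<Inter>Z))"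
  by (rule glb_eq[OF clat_uppB uppB_is_glb])
lemma uppB_lub: "Z \<subseteq> range (uppB R) \<Longrightarrow> lub (range (uppB R)) (\<subseteq>) Z = \<Union>Z"
  by (rule lub_eq[OF clat_uppB union_closed_is_lub[OF uppB_closed]])
lemma lowB_glb: "Z \<subseteq> range (lowB R) \<Longrightarrow> glb (range (lowB R)) (\<subseteq>) Z = \<Inter>Z"
  by (rule glb_eq[OF clat_lowB inter_closed_is_glb[OF lowB_closed]])

lemma DMRS_D:
  assumes "(A, B) \<in> DMRS R"
  shows "A \<in> range (lowB R)" "B \<in> range (uppB R)" "uppB R (uppW R A) \<subseteq> B"
    "A \<inter> singR R = B \<inter> singR R"
  using assms unfolding DMRS_def by auto

lemma sing_mem: "x \<in> singR R \<Longrightarrow> \<exists>y. succR R x = {y}" unfolding singR_def by blast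

lemma dm_join:
  assumes X: "X \<subseteq> DMRS R"
  shows "(lowB R (uppW R (\<Union>(fst ` X))), \<Union>(snd ` X)) \<in> DMRS R"
proof -
  let ?U = "\<Union>(fst ` X)"
  have D: "p \<in> X \<Longrightarrow> fst p \<in> range (lowB R) \<and> snd p \<in> range (uppB R) \<and> uppB R (uppW R (fst p)) \<subseteq> snd p
     \<and> fst p \<inter> singR R = snd p \<inter> singR R" for p
    using DMRS_D[of "fst p" "snd p" R] X by auto
  have c1: "\<Union>(snd ` X) \<in> range (uppB R)" using D by (intro uppB_closed) blast
  have c2: "uppB R (uppW R (lowB R (uppW R ?U))) \<subseteq> \<Union>(snd ` X)"
  proof -
    have "uppB R (uppW R (lowB R (uppW R ?U))) = uppB R (uppW R ?U)" by (simp add: tri3)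
    also have "\<dots> = (\<Union>p\<in>X. uppB R (uppW R (fst p)))"
      by (simp add: uppW_Union uppB_Union image_image)
    also have "\<dots> \<subseteq> \<Union>(snd ` X)" using D by blast
    finally show ?thesis .
  qed
  have c3: "lowB R (uppW R ?U) \<inter> singR R = \<Union>(snd ` X) \<inter> singR R"
  proof (intro equalityI subsetI)
    fix x assume x: "x \<in> lowB R (uppW R ?U) \<inter> singR R"
    obtain y where y: "succR R x = {y}" using sing_mem[of x R] x by blast
    then have "y \<in> uppW R ?U" using x unfolding lowB_def by blast
    then obtain p z where p: "p \<in> X" "z \<in> fst p" "(z, y) \<in> R" unfolding uppW_def predR_def by blast
    have "y \<in> uppW R (fst p)" using p unfolding uppW_def predR_def by blast
    then have "x \<in> uppB R (uppW R (fst p))" using y unfolding uppB_def by blast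
    then have "x \<in> snd p" using D[OF p(1)] by blast
    then show "x \<in> \<Union>(snd ` X) \<inter> singR R" using x p(1) by blast
  next
    fix x assume x: "x \<in> \<Union>(snd ` X) \<inter> singR R"
    then obtain p where p: "p \<in> X" "x \<in> snd p" by blast
    then have xf: "x \<in> fst p" using D[OF p(1)] x by blast
    obtain y where y: "succR R x = {y}" using sing_mem[of x R] x by blast
    then have "(x, y) \<in> R" unfolding succR_def by blast
    then have "y \<in> uppW R ?U" using xf p(1) unfolding uppW_def predR_def by blast
    then have "x \<in> lowB R (uppW R ?U)" using y unfolding lowB_def by auto
    then show "x \<in> lowB R (uppW R ?U) \<inter> singR R" using x by blast
  qed
  show ?thesis unfolding DMRS_def using c1 c2 c3 by blast
qed

lemma dm_meet:
  assumes X: "X \<subseteq> DMRS R"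
  shows "(\<Inter>(fst ` X), uppB R (lowW R (\<Inter>(snd ` X)))) \<in> DMRS R"
proof -
  let ?I = "\<Inter>(fst ` X)" and ?J = "\<Inter>(snd ` X)"
  have D: "p \<in> X \<Longrightarrow> fst p \<in> range (lowB R) \<and> snd p \<in> range (uppB R) \<and> uppB R (uppW R (fst p)) \<subseteq> snd p
     \<and> fst p \<inter> singR R = snd p \<inter> singR R" for p
    using DMRS_D[of "fst p" "snd p" R] X by auto
  have c1: "?I \<in> range (lowB R)" using D by (intro lowB_closed) blast
  have c2: "uppB R (uppW R ?I) \<subseteq> uppB R (lowW R ?J)"
  proof -
    have "uppB R (uppW R ?I) \<subseteq> ?J"
    proof
      fix x assume x: "x \<in> uppB R (uppW R ?I)"
      show "x \<in> ?J"
      proof (rule InterI)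
        fix B assume "B \<in> snd ` X"
        then obtain p where p: "p \<in> X" "B = snd p" by blast
        have "?I \<subseteq> fst p" using p by blast
        then have "uppB R (uppW R ?I) \<subseteq> uppB R (uppW R (fst p))" by (intro mono_uppB mono_uppW)
        then show "x \<in> B" using x D[OF p(1)] p(2) by blast
      qed
    qed
    then have "uppW R ?I \<subseteq> lowW R ?J" unfolding gc1 .
    then show ?thesis by (rule mono_uppB)
  qed
  have c3: "?I \<inter> singR R = uppB R (lowW R ?J) \<inter> singR R"
  proof (intro equalityI subsetI)
    fix x assume x: "x \<in> ?I \<inter> singR R"
    obtain y where y: "succR R x = {y}" using sing_mem[of x R] x by blast
    have "predR R y \<subseteq> ?J"
    proof
      fix z assume z: "z \<in> predR R y"
      show "z \<in> ?J"
      proof (rule InterI)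
        fix B assume "B \<in> snd ` X"
        then obtain p where p: "p \<in> X" "B = snd p" by blast
        have "x \<in> fst p" using x p by blast
        moreover have "(x, y) \<in> R" using y unfolding succR_def by blast
        ultimately have "y \<in> uppW R (fst p)" unfolding uppW_def predR_def by blast
        moreover have "(z, y) \<in> R" using z unfolding predR_def by blast
        ultimately have "z \<in> uppB R (uppW R (fst p))" unfolding uppB_def succR_def by blast
        then show "z \<in> B" using D[OF p(1)] p(2) by blast
      qed
    qed
    then have "y \<in> lowW R ?J" unfolding lowW_def by blast
    then have "x \<in> uppB R (lowW R ?J)" using y unfolding uppB_def by blast
    then show "x \<in> uppB R (lowW R ?J) \<inter> singR R" using x by blast
  next
    fix x assume x: "x \<in> uppB R (lowW R ?J) \<inter> singR R"
    obtain y where y: "succR R x = {y}" using sing_mem[of x R] x by blast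
    then have "y \<in> lowW R ?J" using x unfolding uppB_def by auto
    moreover have "x \<in> predR R y" using y unfolding succR_def predR_def by blast
    ultimately have xJ: "x \<in> ?J" unfolding lowW_def by blast
    have "x \<in> ?I"
    proof (rule InterI)
      fix A assume "A \<in> fst ` X"
      then obtain p where p: "p \<in> X" "A = fst p" by blast
      have "x \<in> snd p" using xJ p by blast
      then show "x \<in> A" using D[OF p(1)] p(2) x by blast
    qed
    then show "x \<in> ?I \<inter> singR R" using x by blast
  qed
  show ?thesis unfolding DMRS_def using c1 c2 c3 by blast
qed




lemma pair_le_eq: "pair_le = prodle (\<subseteq>) (\<subseteq>)"
  by (intro ext) (simp add: pair_le_def prodle_def)

lemma rs_in: "(lowB R Z, uppB R Z) \<in> DMRS R"
proof -
  have 1: "uppB R (uppW R (lowB R Z)) \<subseteq> uppB R Z" by (rule mono_uppB) (simp add: gc2)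
  have 2: "lowB R Z \<inter> singR R = uppB R Z \<inter> singR R"
    unfolding singR_def lowB_def uppB_def by auto
  show ?thesis unfolding DMRS_def using 1 2 by blast
qed

lemma DMRS_sub: "DMRS R \<subseteq> range (lowB R) \<times> range (uppB R)"
  unfolding DMRS_def by blast

lemma DMRS_cl1:
  assumes X: "X \<subseteq> DMRS R"
  shows "lub (range (lowB R) \<times> range (uppB R)) (prodle (\<subseteq>) (\<subseteq>)) X \<in> DMRS R"
proof -
  have XP: "X \<subseteq> range (lowB R) \<times> range (uppB R)" using X DMRS_sub by blast
  have f: "fst ` X \<subseteq> range (lowB R)" and s: "snd ` X \<subseteq> range (uppB R)" using XP by auto
  show ?thesis unfolding prod_lub[OF clat_lowB clat_uppB XP] lowB_lub[OF f] uppB_lub[OF s]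
    using dm_join[OF X] .
qed

lemma DMRS_cl2:
  assumes X: "X \<subseteq> DMRS R"
  shows "glb (range (lowB R) \<times> range (uppB R)) (prodle (\<subseteq>) (\<subseteq>)) X \<in> DMRS R"
proof -
  have XP: "X \<subseteq> range (lowB R) \<times> range (uppB R)" using X DMRS_sub by blast
  have f: "fst ` X \<subseteq> range (lowB R)" and s: "snd ` X \<subseteq> range (uppB R)" using XP by auto
  show ?thesis unfolding prod_glb[OF clat_lowB clat_uppB XP] lowB_glb[OF f] uppB_glb[OF s]
    using dm_meet[OF X] .
qed

lemma cP: "clat (range (lowB R) \<times> range (uppB R)) (prodle (\<subseteq>) (\<subseteq>))"
  by (rule clat_prod[OF clat_lowB clat_uppB])

lemma clat_DMRS: "clat (DMRS R) (prodle (\<subseteq>) (\<subseteq>))"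
  by (rule clat_sub[OF cP DMRS_sub DMRS_cl1 DMRS_cl2])

lemma dm_to_uppB:
  assumes cd: "compl_distrib (DMRS R) (prodle (\<subseteq>) (\<subseteq>))"
  shows "compl_distrib (range (uppB R)) (\<subseteq>)"
proof (rule cd_image[OF clat_DMRS clat_uppB, where \<phi> = snd, OF _ _ _ cd])
  show "snd ` DMRS R = range (uppB R)"
  proof
    show "snd ` DMRS R \<subseteq> range (uppB R)" using DMRS_sub by force
    show "range (uppB R) \<subseteq> snd ` DMRS R"
    proof
      fix B assume "B \<in> range (uppB R)"
      then obtain Z where "B = uppB R Z" by blast
      then show "B \<in> snd ` DMRS R" using rs_in[of R Z] by force
    qed
  qed
next
  fix X assume X: "X \<subseteq> DMRS R"
  have XP: "X \<subseteq> range (lowB R) \<times> range (uppB R)" using X DMRS_sub by blast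
  show "snd (lub (DMRS R) (prodle (\<subseteq>) (\<subseteq>)) X) = lub (range (uppB R)) (\<subseteq>) (snd ` X)"
    using sub_lub[OF cP DMRS_sub DMRS_cl1 DMRS_cl2 X] prod_lub[OF clat_lowB clat_uppB XP] by simp
  show "snd (glb (DMRS R) (prodle (\<subseteq>) (\<subseteq>)) X) = glb (range (uppB R)) (\<subseteq>) (snd ` X)"
    using sub_glb[OF cP DMRS_sub DMRS_cl1 DMRS_cl2 X] prod_glb[OF clat_lowB clat_uppB XP] by simp
qed

lemma to_dm:
  assumes "compl_distrib (range (lowB R)) (\<subseteq>)" "compl_distrib (range (uppB R)) (\<subseteq>)"
  shows "compl_distrib (DMRS R) (prodle (\<subseteq>) (\<subseteq>))"
  by (rule cd_sub[OF cP DMRS_sub DMRS_cl1 DMRS_cl2 cd_prod[OF clat_lowB clat_uppB assms]])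

theorem mainTheorem4:
  fixes R :: "('a \<times> 'a) set"
  shows "(compl_distrib (DMRS R) pair_le \<longleftrightarrow> compl_distrib (range (uppB R)) (\<subseteq>))
       \<and> (compl_distrib (DMRS R) pair_le \<longleftrightarrow> compl_distrib (range (lowB R)) (\<subseteq>))
       \<and> (compl_distrib (DMRS R) pair_le \<longleftrightarrow> compl_distrib (range (uppW R)) (\<subseteq>))
       \<and> (compl_distrib (DMRS R) pair_le \<longleftrightarrow> compl_distrib (range (lowW R)) (\<subseteq>))"
proof -
  have a: "compl_distrib (DMRS R) pair_le \<longleftrightarrow> compl_distrib (range (uppB R)) (\<subseteq>)"
    unfolding pair_le_eq using dm_to_uppB[of R] to_dm[of R] cd_uppB_lowB[of R] by blast
  show ?thesis using a cd_uppB_lowB[of R] cd_uppB_lowW[of R] cd_uppW_lowB[of R] by blast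
qed


end
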